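(* In the robustified SAFFRON construction, let right node $k$ be a singleton whose defective item is $\ell$. Then the probability that the robust singleton rule at node $k$ fails to declare $\ell$ is at most $3n^{-\zeta}$, and the probability that it declares an item different from $\ell$ is at most $n^{-(2+\zeta)}$.
   Context: Items are indexed by $[n]$, $n=2^L$; exactly $K$ items are defective. $b_\ell\in\{0,1\}^L$ is the $L$-bit binary representation of $\ell-1$; $\overline{v}$ is the bitwise complement. Noise model: each test outcome is flipped independently with probability $q\in(0,1/2)$, i.e. the observed outcome vector is $y=A\odot x+w$ (addition mod 2), where $A\odot x$ is the vector of noiseless (Boolean OR) test outcomes and $w$ has i.i.d. Bernoulli$(q)$ entries. Assume an error-correcting code of rate $R$ with encoder $f:\{0,1\}^L\to\{0,1\}^{L/R}$ and decoder $g:\{0,1\}^{L/R}\to\{0,1\}^L$ such that for every $b\in\{0,1\}^L$, $\Pr(g(f(b)+w')\neq b)\le2^{-\zeta L}=n^{-\zeta}$ when $w'$ has i.i.d. Bernoulli$(q)$ entries, for a constant $\zeta>0$. Sequences $s_1=(i_1,\dots,i_n)$, $s_2=(j_1,\dots,j_n)$ are drawn independently and uniformly from $[n]^n$. Robustified signature of item $\ell$: $u_\ell=(f(b_\ell);\overline{f(b_\ell)};f(b_{i_\ell});\overline{f(b_{i_\ell})};f(b_{j_\ell});\overline{f(b_{j_\ell})})\in\{0,1\}^{6L/R}$. A bipartite graph with incidence matrix $T$ connects items to $M$ right nodes; for right node $k$ there are $6L/R$ tests, the $r$-th pooling items $\ell$ with $T_{k\ell}=1$ and $(u_\ell)_r=1$,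 so the observed measurement vector is $z_k=\bigvee_{\ell:T_{k\ell}x_\ell=1}u_\ell+w_k$ with $w_k$ i.i.d. Bernoulli$(q)$, split into six sections $z_k^1,\dots,z_k^6$ of length $L/R$. A right node is a singleton if connected to exactly one defective item. Robust singleton rule at node $k$: let $\ell_1,\ell_2,\ell_3$ be the indices with $b_{\ell_1}=g(z_k^1)$, $b_{\ell_2}=g(z_k^3)$, $b_{\ell_3}=g(z_k^5)$; if $i_{\ell_1}=\ell_2$ and $j_{\ell_1}=\ell_3$, declare item $\ell_1$ defective. Probabilities are over the noise and over $s_1,s_2$. *)

theory Defs
  imports "HOL-Probability.Probability"
begin

text \<open>Items are indexed 0-based by {0..<n}, n = 2^L; item x corresponds to the paper's item x+1,
  and bin L x is the L-bit binary representation of x (= b_(x+1) in the paper).\<close>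

definition bin :: "nat \<Rightarrow> nat \<Rightarrow> bool list" where
  "bin L x = map (\<lambda>i. odd (x div 2 ^ i)) [0..<L]"

definition from_bin :: "bool list \<Rightarrow> nat" where
  "from_bin bs = (\<Sum>i<length bs. if bs ! i then 2 ^ i else 0)"

definition xor_vec :: "bool list \<Rightarrow> bool list \<Rightarrow> bool list" where
  "xor_vec u v = map2 (\<noteq>) u v"

definition compl_vec :: "bool list \<Rightarrow> bool list" where
  "compl_vec u = map Not u"

definition noise :: "nat \<Rightarrow> real \<Rightarrow> bool list pmf" where
  "noise m q = map_pmf (\<lambda>w. map w [0..<m]) (Pi_pmf {..<m} False (\<lambda>_. bernoulli_pmf q))"

definition unif_seq :: "nat \<Rightarrow> (nat \<Rightarrow> nat) pmf" where
  "unif_seq n = pmf_of_set ({..<n} \<rightarrow>\<^sub>E {..<n})"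

definition signature :: "nat \<Rightarrow> (bool list \<Rightarrow> bool list) \<Rightarrow> (nat \<Rightarrow> nat) \<Rightarrow> (nat \<Rightarrow> nat) \<Rightarrow> nat \<Rightarrow> bool list" where
  "signature L f s1 s2 l =
     f (bin L l) @ compl_vec (f (bin L l)) @
     f (bin L (s1 l)) @ compl_vec (f (bin L (s1 l))) @
     f (bin L (s2 l)) @ compl_vec (f (bin L (s2 l)))"

definition or_vec :: "nat \<Rightarrow> nat set \<Rightarrow> (nat \<Rightarrow> bool list) \<Rightarrow> bool list" where
  "or_vec len A u = map (\<lambda>r. \<exists>l\<in>A. u l ! r) [0..<len]"

definition measurement :: "nat \<Rightarrow> nat \<Rightarrow> (bool list \<Rightarrow> bool list) \<Rightarrow> nat set \<Rightarrow> nat set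
    \<Rightarrow> (nat \<Rightarrow> nat) \<Rightarrow> (nat \<Rightarrow> nat) \<Rightarrow> bool list \<Rightarrow> bool list" where
  "measurement L m f S D s1 s2 w = xor_vec (or_vec (6 * m) (S \<inter> D) (signature L f s1 s2)) w"

definition sect :: "nat \<Rightarrow> nat \<Rightarrow> bool list \<Rightarrow> bool list" where
  "sect m j z = take m (drop ((j - 1) * m) z)"

definition robust_rule :: "nat \<Rightarrow> (bool list \<Rightarrow> bool list) \<Rightarrow> (nat \<Rightarrow> nat) \<Rightarrow> (nat \<Rightarrow> nat)
    \<Rightarrow> bool list \<Rightarrow> nat option" where
  "robust_rule m g s1 s2 z =
     (let l1 = from_bin (g (sect m 1 z));
          l2 = from_bin (g (sect m 3 z));
          l3 = from_bin (g (sect m 5 z))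
      in if s1 l1 = l2 \<and> s2 l1 = l3 then Some l1 else None)"

definition joint :: "nat \<Rightarrow> nat \<Rightarrow> real \<Rightarrow> ((nat \<Rightarrow> nat) \<times> (nat \<Rightarrow> nat) \<times> bool list) pmf" where
  "joint n m q = do { s1 \<leftarrow> unif_seq n; s2 \<leftarrow> unif_seq n; w \<leftarrow> noise (6 * m) q; return_pmf (s1, s2, w) }"

end

theory Submission
  imports Defs
begin


lemma prob_bind_le_ind:
  assumes "\<And>x. x \<in> set_pmf M \<Longrightarrow> measure_pmf.prob (K x) A \<le> c * indicator B x" "0 \<le> c"
  shows "measure_pmf.prob (bind_pmf M K) A \<le> c * measure_pmf.prob M B"
proof -
  have "ennreal (measure_pmf.prob (bind_pmf M K) A) = emeasure (bind_pmf M K) A"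
    by (simp add: measure_pmf.emeasure_eq_measure)
  also have "\<dots> = (\<integral>\<^sup>+x. emeasure (K x) A \<partial>M)"
    by (rule emeasure_bind_pmf)
  also have "\<dots> = (\<integral>\<^sup>+x. ennreal (measure_pmf.prob (K x) A) \<partial>M)"
    by (simp add: measure_pmf.emeasure_eq_measure)
  also have "\<dots> \<le> (\<integral>\<^sup>+x. ennreal c * indicator B x \<partial>M)"
  proof (intro nn_integral_mono_AE AE_pmfI)
    fix x assume x: "x \<in> set_pmf M"
    have "measure_pmf.prob (K x) A \<le> c * indicator B x" using assms(1)[OF x] .
    then show "ennreal (measure_pmf.prob (K x) A) \<le> ennreal c * indicator B x"
      by (cases "x \<in> B") (auto intro: ennreal_leI simp: order_antisym measure_nonneg)
  qed
  also have "\<dots> = ennreal c * emeasure M B"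
    by (simp add: nn_integral_cmult_indicator)
  also have "\<dots> = ennreal (c * measure_pmf.prob M B)"
    using assms(2) by (simp add: measure_pmf.emeasure_eq_measure ennreal_mult)
  finally show ?thesis using assms(2) by (simp add: ennreal_le_iff)
qed

lemma prob_bind_le:
  assumes "\<And>x. x \<in> set_pmf M \<Longrightarrow> measure_pmf.prob (K x) A \<le> c" "0 \<le> c"
  shows "measure_pmf.prob (bind_pmf M K) A \<le> c"
  using prob_bind_le_ind[of M K A c UNIV] assms by simp

lemma from_bin_bin: "from_bin (bin L x) = x mod 2 ^ L"
proof (induction L)
  case 0 then show ?case by (simp add: from_bin_def bin_def)
next
  case (Suc L)
  have "from_bin (bin (Suc L) x) = from_bin (bin L x) + (if odd (x div 2^L) then 2^L else 0)"
    by (simp add: from_bin_def bin_def nth_append)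
  also have "\<dots> = x mod 2^L + 2^L * (x div 2^L mod 2)"
    using Suc by (auto simp: odd_iff_mod_2_eq_one even_iff_mod_2_eq_zero)
  also have "\<dots> = x mod 2 ^ Suc L"
    by (metis mod_mult2_eq power_Suc2 add.commute)
  finally show ?case .
qed

lemma from_bin_less: "from_bin bs < 2 ^ length bs"
proof (induction bs rule: rev_induct)
  case Nil then show ?case by (simp add: from_bin_def)
next
  case (snoc b bs)
  have "from_bin (bs @ [b]) = from_bin bs + (if b then 2 ^ length bs else 0)"
    by (simp add: from_bin_def nth_append)
  then show ?case using snoc by auto
qed

lemma length_bin[simp]: "length (bin L x) = L" by (simp add: bin_def)

lemma unif_seq_Pi: "0 < n \<Longrightarrow> unif_seq n = Pi_pmf {..<n} undefined (\<lambda>_. pmf_of_set {..<n})"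
  unfolding unif_seq_def
  apply (subst Pi_pmf_of_set)
     apply auto[3]
  apply (rule arg_cong[where f=pmf_of_set])
  apply (auto simp: PiE_dflt_def PiE_def extensional_def Pi_def)
  done

lemma set_unif_seq: "0 < n \<Longrightarrow> s \<in> set_pmf (unif_seq n) \<Longrightarrow> s \<in> {..<n} \<rightarrow>\<^sub>E {..<n}"
  unfolding unif_seq_def
  by (subst (asm) set_pmf_of_set) (auto simp: PiE_eq_empty_iff intro: finite_PiE)

lemma coord_prob:
  assumes "a < n" "a \<noteq> b"
  shows "measure_pmf.prob (unif_seq n) {s. s a = h (s b)} \<le> 1 / real n"
proof -
  have n: "0 < n" using assms by simp
  have ins: "{..<n} = insert a ({..<n} - {a})" using assms by auto
  have "unif_seq n = map_pmf (\<lambda>(y,f). f(a:=y)) (pair_pmf (pmf_of_set {..<n}) (Pi_pmf ({..<n} - {a}) undefined (\<lambda>_. pmf_of_set {..<n})))"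
    by (subst unif_seq_Pi[OF n], subst ins, subst Pi_pmf_insert) auto
  also have "\<dots> = bind_pmf (Pi_pmf ({..<n} - {a}) undefined (\<lambda>_. pmf_of_set {..<n}))
      (\<lambda>f. bind_pmf (pmf_of_set {..<n}) (\<lambda>y. return_pmf (f(a:=y))))"
    unfolding pair_pmf_def map_bind_pmf
    by (subst bind_commute_pmf) (simp add: map_pmf_def bind_assoc_pmf bind_return_pmf)
  finally have eq: "unif_seq n = \<dots>" .
  show ?thesis unfolding eq
  proof (rule prob_bind_le)
    fix f
    show "measure_pmf.prob (bind_pmf (pmf_of_set {..<n}) (\<lambda>y. return_pmf (f(a := y)))) {s. s a = h (s b)} \<le> 1 / real n"
    proof -
      have "measure_pmf.prob (bind_pmf (pmf_of_set {..<n}) (\<lambda>y. return_pmf (f(a := y)))) {s. s a = h (s b)}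
          \<le> 1 * measure_pmf.prob (pmf_of_set {..<n}) {h (f b)}"
        by (rule prob_bind_le_ind) (use assms in \<open>auto simp: indicator_def\<close>)
      also have "\<dots> \<le> 1 / real n"
        using n by (simp add: measure_pmf_single, subst pmf_of_set) (auto simp: indicator_def)
      finally show ?thesis .
    qed
  qed simp
qed


lemma noise_sect:
  assumes "off + m \<le> N"
  shows "map_pmf (\<lambda>w. take m (drop off w)) (noise N q) = noise m q"
proof -
  define B where "B = (\<lambda>_::nat. bernoulli_pmf q)"
  define h where "h = (\<lambda>i::nat. i + off)"
  have bij: "bij_betw h {..<m} {off..<off+m}"
    unfolding h_def by (rule bij_betwI[where g="\<lambda>i. i - off"]) auto
  have P1: "Pi_pmf {..<m} False B = map_pmf (\<lambda>g. g \<circ> h) (Pi_pmf {off..<off+m} False B)"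
    unfolding B_def by (rule Pi_pmf_bij_betw[OF _ bij]) (auto simp: h_def)
  have P2: "Pi_pmf {off..<off+m} False B = map_pmf (\<lambda>f x. if x \<in> {off..<off+m} then f x else False) (Pi_pmf {..<N} False B)"
    by (rule Pi_pmf_subset) (use assms in auto)
  have "noise m q = map_pmf (\<lambda>w. map w [0..<m]) (Pi_pmf {..<m} False B)"
    by (simp add: noise_def B_def)
  also have "\<dots> = map_pmf (\<lambda>w. map (\<lambda>i. w (i + off)) [0..<m]) (Pi_pmf {..<N} False B)"
    unfolding P1 P2 map_pmf_comp by (intro map_pmf_cong refl) (auto simp: h_def)
  also have "\<dots> = map_pmf (\<lambda>w. take m (drop off w)) (noise N q)"
    unfolding noise_def B_def map_pmf_comp
    using assms by (intro map_pmf_cong refl) (auto intro!: nth_equalityI simp: add.commute)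
  finally show ?thesis ..
qed
lemma sect_xor: "sect m j (xor_vec u v) = xor_vec (sect m j u) (sect m j v)"
  by (simp add: sect_def xor_vec_def take_map drop_map take_zip drop_zip)

lemma length_xor[simp]: "length (xor_vec u v) = min (length u) (length v)"
  by (simp add: xor_vec_def)

lemma length_sect: "j * m \<le> length z \<Longrightarrow> 0 < j \<Longrightarrow> length (sect m j z) = m"
  by (cases j) (auto simp: sect_def)

lemma set_noise: "w \<in> set_pmf (noise N q) \<Longrightarrow> length w = N"
  by (auto simp: noise_def)

lemma sig_sects:
  assumes "\<And>b. length b = L \<Longrightarrow> length (f b) = m"
  shows "sect m 1 (signature L f s1 s2 l) = f (bin L l)"
        "sect m 3 (signature L f s1 s2 l) = f (bin L (s1 l))"
        "sect m 5 (signature L f s1 s2 l) = f (bin L (s2 l))"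
        "length (signature L f s1 s2 l) = 6 * m"
  using assms by (simp_all add: sect_def signature_def compl_vec_def)

lemma meas_eq:
  assumes "\<And>b. length b = L \<Longrightarrow> length (f b) = m" "S \<inter> D = {l}"
  shows "measurement L m f S D s1 s2 w = xor_vec (signature L f s1 s2 l) w"
proof -
  have "or_vec (6 * m) (S \<inter> D) (signature L f s1 s2) = signature L f s1 s2 l"
    using sig_sects(4)[OF assms(1)] assms(2)
    by (auto simp: or_vec_def intro!: nth_equalityI)
  then show ?thesis by (simp add: measurement_def)
qed

lemma rule_eq:
  assumes "\<And>b. length b = L \<Longrightarrow> length (f b) = m" "S \<inter> D = {l}"
  shows "robust_rule m g s1 s2 (measurement L m f S D s1 s2 w) =
    (let l1 = from_bin (g (xor_vec (f (bin L l)) (sect m 1 w)));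
         l2 = from_bin (g (xor_vec (f (bin L (s1 l))) (sect m 3 w)));
         l3 = from_bin (g (xor_vec (f (bin L (s2 l))) (sect m 5 w)))
     in if s1 l1 = l2 \<and> s2 l1 = l3 then Some l1 else None)"
  by (simp only: meas_eq[OF assms] robust_rule_def sect_xor sig_sects[OF assms(1)])

theorem lemma2:
  fixes L m K :: nat and R q \<zeta> :: real
    and f g :: "bool list \<Rightarrow> bool list"
    and S D :: "nat set" and l :: nat
  defines "n \<equiv> 2 ^ L"
  assumes q: "0 < q" "q < 1/2"
    and rate: "0 < R" "real m = real L / R"
    and zeta: "\<zeta> > 0"
    and f_len: "\<And>b. length b = L \<Longrightarrow> length (f b) = m"
    and g_len: "\<And>z. length z = m \<Longrightarrow> length (g z) = L"
    and code: "\<And>b. length b = L \<Longrightarrow>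
        measure_pmf.prob (noise m q) {w. g (xor_vec (f b) w) \<noteq> b} \<le> real n powr (- \<zeta>)"
    and D: "D \<subseteq> {..<n}" "card D = K"
    and S: "S \<subseteq> {..<n}"
    and singleton: "S \<inter> D = {l}"
  shows "measure_pmf.prob (joint n m q)
           {(s1, s2, w). robust_rule m g s1 s2 (measurement L m f S D s1 s2 w) \<noteq> Some l}
           \<le> 3 * real n powr (- \<zeta>)
       \<and> measure_pmf.prob (joint n m q)
           {(s1, s2, w). \<exists>l'. l' \<noteq> l \<and> robust_rule m g s1 s2 (measurement L m f S D s1 s2 w) = Some l'}
           \<le> real n powr (- (2 + \<zeta>))"
proof -
  have n_pos: "0 < n" unfolding n_def by simp
  have l_lt: "l < n" using singleton S by auto
  have flen: "\<And>x. length (f (bin L x)) = m" using f_len by simp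
  define N where "N = noise (6 * m) q"
  define U where "U = unif_seq n"
  define F where "F = (\<lambda>b j. {w. g (xor_vec (f b) (sect m j w)) \<noteq> b})"
  have Fprob: "measure_pmf.prob N (F b j) \<le> real n powr (- \<zeta>)"
    if "length b = L" "(j - 1) * m + m \<le> 6 * m" for b j
  proof -
    have "measure_pmf.prob N (F b j) = measure_pmf.prob (map_pmf (\<lambda>w. take m (drop ((j - 1) * m) w)) N)
             {w. g (xor_vec (f b) w) \<noteq> b}"
      by (simp add: F_def sect_def vimage_def)
    also have "\<dots> = measure_pmf.prob (noise m q) {w. g (xor_vec (f b) w) \<noteq> b}"
      unfolding N_def by (subst noise_sect) (use that in auto)
    also have "\<dots> \<le> real n powr (- \<zeta>)" using code that by simp
    finally show ?thesis .
  qed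
  have rule: "robust_rule m g s1 s2 (measurement L m f S D s1 s2 w) =
    (let l1 = from_bin (g (xor_vec (f (bin L l)) (sect m 1 w)));
         l2 = from_bin (g (xor_vec (f (bin L (s1 l))) (sect m 3 w)));
         l3 = from_bin (g (xor_vec (f (bin L (s2 l))) (sect m 5 w)))
     in if s1 l1 = l2 \<and> s2 l1 = l3 then Some l1 else None)" for s1 s2 w
    by (rule rule_eq[OF f_len singleton])
  have fb: "from_bin (bin L x) = x" if "x < n" for x
    using that by (simp add: from_bin_bin n_def)
  have joint1: "joint n m q = bind_pmf U (\<lambda>s1. bind_pmf U (\<lambda>s2. bind_pmf N (\<lambda>w. return_pmf (s1, s2, w))))"
    by (simp add: joint_def U_def N_def)
  have zpos: "0 \<le> real n powr (- \<zeta>)" by simp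
  define A1 where "A1 = {(s1, s2, w). robust_rule m g s1 s2 (measurement L m f S D s1 s2 w) \<noteq> Some l}"
  have part1: "measure_pmf.prob (joint n m q) A1 \<le> 3 * real n powr (- \<zeta>)"
    unfolding joint1
  proof (rule prob_bind_le, rule prob_bind_le)
    fix s1 s2 assume s1: "s1 \<in> set_pmf U" and s2: "s2 \<in> set_pmf U"
    have s1l: "s1 l < n" using set_unif_seq[OF n_pos s1[unfolded U_def]] l_lt by auto
    have s2l: "s2 l < n" using set_unif_seq[OF n_pos s2[unfolded U_def]] l_lt by auto
    have "measure_pmf.prob (bind_pmf N (\<lambda>w. return_pmf (s1, s2, w))) A1
        \<le> 1 * measure_pmf.prob N {w. (s1, s2, w) \<in> A1}"
      by (rule prob_bind_le_ind) (auto simp: indicator_def)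
    also have "\<dots> = measure_pmf.prob N ({w. (s1, s2, w) \<in> A1} \<inter> set_pmf N)"
      by (simp add: measure_Int_set_pmf)
    also have "\<dots> \<le> measure_pmf.prob N (F (bin L l) 1 \<union> F (bin L (s1 l)) 3 \<union> F (bin L (s2 l)) 5)"
    proof (rule measure_pmf.finite_measure_mono)
      show "{w. (s1, s2, w) \<in> A1} \<inter> set_pmf N \<subseteq> F (bin L l) 1 \<union> F (bin L (s1 l)) 3 \<union> F (bin L (s2 l)) 5"
        using fb[OF l_lt] fb[OF s1l] fb[OF s2l]
        by (auto simp: A1_def F_def rule Let_def)
    qed simp
    also have "\<dots> \<le> measure_pmf.prob N (F (bin L l) 1) + measure_pmf.prob N (F (bin L (s1 l)) 3)
                    + measure_pmf.prob N (F (bin L (s2 l)) 5)"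
      by (smt (verit) measure_Un_le sets_measure_pmf UNIV_I)
    also have "\<dots> \<le> 3 * real n powr (- \<zeta>)"
      using Fprob[of "bin L l" 1] Fprob[of "bin L (s1 l)" 3] Fprob[of "bin L (s2 l)" 5] by simp
    finally show "measure_pmf.prob (bind_pmf N (\<lambda>w. return_pmf (s1, s2, w))) A1 \<le> 3 * real n powr (- \<zeta>)" .
  qed (use zpos in auto)
  define A2 where "A2 = {(s1, s2, w). \<exists>l'. l' \<noteq> l \<and> robust_rule m g s1 s2 (measurement L m f S D s1 s2 w) = Some l'}"
  have joint2: "joint n m q = bind_pmf N (\<lambda>w. bind_pmf U (\<lambda>s1. bind_pmf U (\<lambda>s2. return_pmf (s1, s2, w))))"
    unfolding joint1 by (simp add: bind_commute_pmf[of U N])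
  have part2: "measure_pmf.prob (joint n m q) A2 \<le> 1 / real n ^ 2 * measure_pmf.prob N (F (bin L l) 1)"
    unfolding joint2
  proof (rule prob_bind_le_ind)
    fix w assume w: "w \<in> set_pmf N"
    have wlen: "length w = 6 * m" using w set_noise N_def by blast
    define a where "a = from_bin (g (xor_vec (f (bin L l)) (sect m 1 w)))"
    define h3 where "h3 = (\<lambda>x. from_bin (g (xor_vec (f (bin L x)) (sect m 3 w))))"
    define h5 where "h5 = (\<lambda>x. from_bin (g (xor_vec (f (bin L x)) (sect m 5 w))))"
    have a_lt: "a < n"
    proof -
      have "length (xor_vec (f (bin L l)) (sect m 1 w)) = m"
        using wlen flen by (simp add: length_sect)
      then have "length (g (xor_vec (f (bin L l)) (sect m 1 w))) = L" using g_len by blast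
      then show ?thesis unfolding a_def n_def by (metis from_bin_less)
    qed
    have sub: "{(s1, s2, w'). w' = w \<and> (s1, s2, w') \<in> A2} \<subseteq>
        {(s1, s2, w'). a \<noteq> l \<and> s1 a = h3 (s1 l) \<and> s2 a = h5 (s2 l)}"
      by (auto simp: A2_def rule a_def h3_def h5_def Let_def split: if_splits)
    have sub2: "a \<noteq> l \<Longrightarrow> w \<in> F (bin L l) 1"
      using fb[OF l_lt] by (auto simp: F_def a_def)
    show "measure_pmf.prob (bind_pmf U (\<lambda>s1. bind_pmf U (\<lambda>s2. return_pmf (s1, s2, w)))) A2
          \<le> 1 / real n ^ 2 * indicator (F (bin L l) 1) w"
    proof (cases "a = l")
      case True
      have "measure_pmf.prob (bind_pmf U (\<lambda>s1. bind_pmf U (\<lambda>s2. return_pmf (s1, s2, w)))) A2 \<le> 0"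
      proof (intro prob_bind_le)
        fix s1 s2
        show "measure_pmf.prob (return_pmf (s1, s2, w)) A2 \<le> 0"
          using sub True by (auto simp: indicator_def)
      qed auto
      then show ?thesis by (smt (verit) divide_nonneg_nonneg indicator_pos_le mult_nonneg_nonneg of_nat_0_le_iff zero_le_power)
    next
      case False
      have "measure_pmf.prob (bind_pmf U (\<lambda>s1. bind_pmf U (\<lambda>s2. return_pmf (s1, s2, w)))) A2
          \<le> (1 / real n) * measure_pmf.prob U {s1. s1 a = h3 (s1 l)}"
      proof (rule prob_bind_le_ind)
        fix s1
        show "measure_pmf.prob (bind_pmf U (\<lambda>s2. return_pmf (s1, s2, w))) A2
            \<le> 1 / real n * indicator {s1. s1 a = h3 (s1 l)} s1"
        proof (cases "s1 a = h3 (s1 l)")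
          case True
          have "measure_pmf.prob (bind_pmf U (\<lambda>s2. return_pmf (s1, s2, w))) A2
              \<le> 1 * measure_pmf.prob U {s2. s2 a = h5 (s2 l)}"
            by (rule prob_bind_le_ind) (use sub in \<open>auto simp: indicator_def\<close>)
          also have "\<dots> \<le> 1 / real n"
            unfolding U_def using coord_prob[OF a_lt False] by simp
          finally show ?thesis using True by simp
        next
          case F: False
          have "measure_pmf.prob (bind_pmf U (\<lambda>s2. return_pmf (s1, s2, w))) A2 \<le> 0"
            by (rule prob_bind_le) (use sub F in \<open>auto simp: indicator_def\<close>)
          then show ?thesis using F by simp
        qed
      qed simp
      also have "\<dots> \<le> (1 / real n) * (1 / real n)"
        unfolding U_def using coord_prob[OF a_lt False] by (intro mult_left_mono) auto
      also have "\<dots> = 1 / real n ^ 2 * indicator (F (bin L l) 1) w"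
        using sub2[OF False] by (simp add: power2_eq_square)
      finally show ?thesis .
    qed
  qed simp
  have "1 / real n ^ 2 * measure_pmf.prob N (F (bin L l) 1) \<le> 1 / real n ^ 2 * real n powr (- \<zeta>)"
    by (intro mult_left_mono Fprob) auto
  also have "\<dots> = real n powr (- (2 + \<zeta>))"
  proof -
    have e1: "real n powr (- (2 + \<zeta>)) = real n powr (-2) * real n powr (-\<zeta>)"
      by (simp add: powr_add[symmetric])
    have e2: "real n powr (-2) = 1 / real n ^ 2"
      using n_pos by (simp add: powr_minus powr_numeral divide_inverse)
    show ?thesis using e1 e2 by simp
  qed
  finally have "measure_pmf.prob (joint n m q) A2 \<le> real n powr (- (2 + \<zeta>))"
    using part2 by linarith
  then show ?thesis using part1 unfolding A1_def A2_def by blast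
qed

end
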